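(* Let $v\ge 2$ be an integer and $p$ a prime with $p\equiv 1\pmod v$ and $p-1>v$. Let $T$ be the number of permutations $\pi$ of $\{1,\dots,p-1\}$ such that the sequence $\pi_v=(\pi(1)\,\%\,v,\dots,\pi(p-1)\,\%\,v)$ has least period $p-1$. Let $k=(p-1)/v$, let $Q$ be the set of prime divisors of $k$ and $q'=\min Q$. Then $$(p-1)!\left(1-\sum_{q\in Q}\frac{\left(\frac{p-1}{q}\right)!\,(k!)^v}{(p-1)!\,\left(\left(\frac{k}{q}\right)!\right)^v}\right)\ \le\ T\ \le\ (p-1)!\left(1-\frac{\left(\frac{p-1}{q'}\right)!\,(k!)^v}{(p-1)!\,\left(\left(\frac{k}{q'}\right)!\right)^v}\right).$$ Moreover, for fixed $v$: for every $\varepsilon>0$ there exists $n_\varepsilon$ such that for all primes $p\ge n_\varepsilon$ with $p\equiv1\pmod v$, $(p-1)!(1-\varepsilon)\le T\le (p-1)!$.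
   Context: $x\,\%\,v$ is the least nonnegative remainder modulo $v$. A sequence of length $N$ is regarded cyclically; its least period is the smallest $\rho>0$ with $s(i+\rho)=s(i)$ for all indices $i$ taken modulo $N$. *)

theory Defs
  imports Complex_Main "HOL-Combinatorics.Permutations" "HOL-Computational_Algebra.Primes"
begin

text \<open>A sequence s indexed by 1..N, regarded cyclically. rho is a period if
  s(i + rho) = s(i) for all i, indices taken modulo N (represented in 1..N).\<close>
definition is_cyc_period :: "(nat \<Rightarrow> 'a) \<Rightarrow> nat \<Rightarrow> nat \<Rightarrow> bool" where
  "is_cyc_period s N \<rho> \<longleftrightarrow> (\<forall>i\<in>{1..N}. s ((i - 1 + \<rho>) mod N + 1) = s i)"

definition least_cyc_period :: "(nat \<Rightarrow> 'a) \<Rightarrow> nat \<Rightarrow> nat" where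
  "least_cyc_period s N = (LEAST \<rho>. 0 < \<rho> \<and> is_cyc_period s N \<rho>)"

definition T_count :: "nat \<Rightarrow> nat \<Rightarrow> nat" where
  "T_count v p = card {\<pi>. \<pi> permutes {1..p-1} \<and>
      least_cyc_period (\<lambda>i. \<pi> i mod v) (p - 1) = p - 1}"

end

theory Submission
  imports Defs "HOL-Real_Asymp.Real_Asymp"
begin


lemma inj_count:
  fixes g :: "'x \<Rightarrow> 'y" and r :: "'i \<Rightarrow> 'y"
  assumes "finite I" "finite X" "finite Ys" "r ` I \<subseteq> Ys"
    "\<forall>y. card {i\<in>I. r i = y} = card {x\<in>X. g x = y}"
  shows "card {f \<in> PiE I (\<lambda>_. X). inj_on f I \<and> (\<forall>i\<in>I. g (f i) = r i)}
         = (\<Prod>y\<in>Ys. fact (card {i\<in>I. r i = y}))"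
  using assms
proof (induction I arbitrary: X rule: finite_induct)
  case empty
  then show ?case by (simp add: PiE_empty_domain)
next
  case (insert a I)
  define y0 where "y0 = r a"
  define Xa where "Xa = {x\<in>X. g x = y0}"
  define B where "B = (\<lambda>X'. {f \<in> PiE I (\<lambda>_. X'). inj_on f I \<and> (\<forall>i\<in>I. g (f i) = r i)})"
  define P' where "P' = (\<Prod>y\<in>Ys. fact (card {i\<in>I. r i = y}) :: nat)"
  have y0Y: "y0 \<in> Ys" using insert.prems y0_def by auto
  have cnt: "card {i\<in>insert a I. r i = y} = (if y = y0 then Suc (card {i\<in>I. r i = y}) else card {i\<in>I. r i = y})" for y
  proof -
    have "{i\<in>insert a I. r i = y} = (if y = y0 then insert a {i\<in>I. r i = y} else {i\<in>I. r i = y})"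
      using y0_def by auto
    then show ?thesis using insert.hyps by simp
  qed
  have BX: "card (B (X - {x})) = P'" if "x \<in> Xa" for x
  proof -
    have "card {i\<in>I. r i = y} = card {x'\<in>X - {x}. g x' = y}" for y
    proof -
      have e: "{x'\<in>X - {x}. g x' = y} = {x'\<in>X. g x' = y} - {x}" by auto
      have "x \<in> {x'\<in>X. g x' = y} \<longleftrightarrow> y = y0" using that Xa_def by auto
      then show ?thesis using e cnt[of y] insert.prems(4)[rule_format, of y] insert.prems(1)
        by (auto split: if_splits)
    qed
    then show ?thesis unfolding B_def P'_def
      using insert.IH[of "X - {x}"] insert.prems by auto
  qed
  have eq: "{f \<in> PiE (insert a I) (\<lambda>_. X). inj_on f (insert a I) \<and> (\<forall>i\<in>insert a I. g (f i) = r i)}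
      = (\<Union>x\<in>Xa. (\<lambda>f. f(a := x)) ` B (X - {x}))"
  proof (intro equalityI subsetI)
    fix f assume f: "f \<in> {f \<in> PiE (insert a I) (\<lambda>_. X). inj_on f (insert a I) \<and> (\<forall>i\<in>insert a I. g (f i) = r i)}"
    define f' where "f' = f(a := undefined)"
    have "f a \<in> Xa" using f Xa_def y0_def by auto
    moreover have "f' \<in> B (X - {f a})"
      unfolding B_def f'_def using f insert.hyps
      by (auto simp: PiE_iff inj_on_def extensional_def)
    moreover have "f = f'(a := f a)" unfolding f'_def by simp
    ultimately show "f \<in> (\<Union>x\<in>Xa. (\<lambda>f. f(a := x)) ` B (X - {x}))" by blast
  next
    fix h assume "h \<in> (\<Union>x\<in>Xa. (\<lambda>f. f(a := x)) ` B (X - {x}))"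
    then obtain x f where x: "x \<in> Xa" and f: "f \<in> B (X - {x})" and h: "h = f(a := x)" by blast
    show "h \<in> {f \<in> PiE (insert a I) (\<lambda>_. X). inj_on f (insert a I) \<and> (\<forall>i\<in>insert a I. g (f i) = r i)}"
      using x f h insert.hyps unfolding B_def Xa_def y0_def
      by (auto simp: PiE_iff inj_on_def extensional_def)
  qed
  have finB: "finite (B X')" if "finite X'" for X'
    unfolding B_def using that insert.hyps by (auto intro: finite_subset[OF _ finite_PiE])
  have injupd: "inj_on (\<lambda>f. f(a := x)) (B X')" for x X'
  proof (rule inj_onI)
    fix f1 f2 assume "f1 \<in> B X'" "f2 \<in> B X'" "f1(a := x) = f2(a := x)"
    then show "f1 = f2" unfolding B_def using insert.hyps
      by (metis (no_types, lifting) PiE_arb fun_upd_idem_iff fun_upd_upd mem_Collect_eq)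
  qed
  have "card (\<Union>x\<in>Xa. (\<lambda>f. f(a := x)) ` B (X - {x})) = (\<Sum>x\<in>Xa. card ((\<lambda>f. f(a := x)) ` B (X - {x})))"
    by (rule card_UN_disjoint) (use insert.prems finB Xa_def in \<open>auto dest: fun_cong[where x=a]\<close>)
  also have "\<dots> = (\<Sum>x\<in>Xa. P')"
    by (rule sum.cong) (auto simp: card_image[OF injupd] BX)
  also have "\<dots> = card Xa * P'" by simp
  also have "card Xa = Suc (card {i\<in>I. r i = y0})"
    using cnt[of y0] insert.prems(4) Xa_def by auto
  finally have L: "card {f \<in> PiE (insert a I) (\<lambda>_. X). inj_on f (insert a I) \<and> (\<forall>i\<in>insert a I. g (f i) = r i)}
     = Suc (card {i\<in>I. r i = y0}) * P'" by (simp only: eq)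
  have R1: "(\<Prod>y\<in>Ys. fact (card {i\<in>insert a I. r i = y}) :: nat) = fact (card {i\<in>insert a I. r i = y0}) * (\<Prod>y\<in>Ys - {y0}. fact (card {i\<in>insert a I. r i = y}))"
    by (rule prod.remove[OF insert.prems(2) y0Y])
  also have "\<dots> = fact (Suc (card {i\<in>I. r i = y0})) * (\<Prod>y\<in>Ys - {y0}. fact (card {i\<in>I. r i = y}))"
    apply (intro arg_cong2[where f="(*)"] prod.cong refl)
    apply (subst cnt; simp)
    apply (subst cnt; simp)
    done
  finally have R1: "(\<Prod>y\<in>Ys. fact (card {i\<in>insert a I. r i = y}) :: nat) = fact (Suc (card {i\<in>I. r i = y0})) * (\<Prod>y\<in>Ys - {y0}. fact (card {i\<in>I. r i = y}))" .
  have R2: "P' = fact (card {i\<in>I. r i = y0}) * (\<Prod>y\<in>Ys - {y0}. fact (card {i\<in>I. r i = y}))"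
    unfolding P'_def by (rule prod.remove[OF insert.prems(2) y0Y])
  show ?case by (simp only: L R1 R2 fact_Suc of_nat_id mult.assoc)
qed


lemma perm_count:
  fixes S :: "nat set" and g r :: "nat \<Rightarrow> 'y"
  assumes "finite S" "finite Ys" "r ` S \<subseteq> Ys" "\<forall>y. card {i\<in>S. r i = y} = card {x\<in>S. g x = y}"
  shows "card {\<pi>. \<pi> permutes S \<and> (\<forall>i\<in>S. g (\<pi> i) = r i)} = (\<Prod>y\<in>Ys. fact (card {i\<in>S. r i = y}))"
proof -
  let ?A = "{\<pi>. \<pi> permutes S \<and> (\<forall>i\<in>S. g (\<pi> i) = r i)}"
  let ?B = "{f \<in> PiE S (\<lambda>_. S). inj_on f S \<and> (\<forall>i\<in>S. g (f i) = r i)}"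
  have inj: "inj_on (\<lambda>\<pi>. restrict \<pi> S) ?A"
  proof (rule inj_onI)
    fix p1 p2 assume p: "p1 \<in> ?A" "p2 \<in> ?A" "restrict p1 S = restrict p2 S"
    show "p1 = p2"
    proof
      fix x show "p1 x = p2 x"
      proof (cases "x \<in> S")
        case True then show ?thesis using p(3) by (metis restrict_apply')
      next
        case False then show ?thesis using p(1,2) by (metis (no_types, lifting) mem_Collect_eq permutes_not_in)
      qed
    qed
  qed
  have img: "(\<lambda>\<pi>. restrict \<pi> S) ` ?A = ?B"
  proof (intro equalityI subsetI)
    fix f assume "f \<in> (\<lambda>\<pi>. restrict \<pi> S) ` ?A"
    then obtain \<pi> where pi: "\<pi> \<in> ?A" and f: "f = restrict \<pi> S" by blast
    have "\<pi> permutes S" using pi by simp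
    then show "f \<in> ?B" using pi f
      by (auto simp: PiE_iff permutes_in_image inj_on_def permutes_inj_on[THEN inj_onD])
  next
    fix f assume f: "f \<in> ?B"
    define \<pi> where "\<pi> = (\<lambda>i. if i \<in> S then f i else i)"
    have io: "inj_on \<pi> S" using f unfolding \<pi>_def inj_on_def by auto
    have sub: "\<pi> ` S \<subseteq> S" using f unfolding \<pi>_def by (auto simp: PiE_iff)
    have "\<pi> ` S = S" by (rule endo_inj_surj[OF assms(1) sub io])
    then have "bij_betw \<pi> S S" using io by (simp add: bij_betw_def)
    then have pp: "\<pi> permutes S" by (rule bij_imp_permutes) (simp add: \<pi>_def)
    have "restrict \<pi> S = f" using f unfolding \<pi>_def by (auto simp: PiE_iff extensional_def)
    moreover have "\<pi> \<in> ?A" using pp f unfolding \<pi>_def by auto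
    ultimately show "f \<in> (\<lambda>\<pi>. restrict \<pi> S) ` ?A" by blast
  qed
  have "card ?A = card ?B" using card_image[OF inj] img by simp
  also have "\<dots> = (\<Prod>y\<in>Ys. fact (card {i\<in>S. r i = y}))"
    by (rule inj_count) (use assms in auto)
  finally show ?thesis .
qed

lemma per_mult:
  fixes f :: "nat \<Rightarrow> 'b"
  assumes "\<forall>j. f (j + d) = f j"
  shows "f (j + t * d) = f j"
proof (induction t)
  case 0 then show ?case by simp
next
  case (Suc t)
  have "f (j + Suc t * d) = f ((j + t * d) + d)" by (simp add: algebra_simps)
  then show ?case using assms Suc by simp
qed

lemma cnt_periodic:
  fixes f :: "nat \<Rightarrow> 'b"
  assumes "\<forall>j. f (j + d) = f j"
  shows "card {j\<in>{0..<t*d}. f j = y} = t * card {j\<in>{0..<d}. f j = y}"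
proof (induction t)
  case 0 then show ?case by simp
next
  case (Suc t)
  have split: "{j\<in>{0..<Suc t*d}. f j = y} = {j\<in>{0..<t*d}. f j = y} \<union> {j\<in>{t*d..<t*d+d}. f j = y}"
    by auto
  have im: "{j\<in>{t*d..<t*d+d}. f j = y} = (\<lambda>j. j + t*d) ` {j\<in>{0..<d}. f j = y}"
  proof (intro equalityI subsetI)
    fix x assume x: "x \<in> {j\<in>{t*d..<t*d+d}. f j = y}"
    then have "x = (x - t*d) + t*d" "x - t*d \<in> {j\<in>{0..<d}. f j = y}"
      using per_mult[OF assms, of "x - t*d" t] by auto
    then show "x \<in> (\<lambda>j. j + t*d) ` {j\<in>{0..<d}. f j = y}" by blast
  next
    fix x assume "x \<in> (\<lambda>j. j + t*d) ` {j\<in>{0..<d}. f j = y}"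
    then show "x \<in> {j\<in>{t*d..<t*d+d}. f j = y}" using per_mult[OF assms] by auto
  qed
  have "card {j\<in>{0..<Suc t*d}. f j = y} = card {j\<in>{0..<t*d}. f j = y} + card {j\<in>{t*d..<t*d+d}. f j = y}"
    unfolding split by (rule card_Un_disjoint) auto
  also have "card {j\<in>{t*d..<t*d+d}. f j = y} = card {j\<in>{0..<d}. f j = y}"
    unfolding im by (rule card_image) (simp add: inj_on_def)
  finally show ?case using Suc by simp
qed

lemma per_iff:
  assumes "N > 0"
  shows "is_cyc_period s N \<rho> \<longleftrightarrow> (\<forall>j. s ((j + \<rho>) mod N + 1) = s (j mod N + 1))"
proof
  assume h: "is_cyc_period s N \<rho>"
  show "\<forall>j. s ((j + \<rho>) mod N + 1) = s (j mod N + 1)"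
  proof
    fix j
    have "j mod N + 1 \<in> {1..N}" using assms by (simp add: Suc_leI)
    then have "s ((j mod N + 1 - 1 + \<rho>) mod N + 1) = s (j mod N + 1)"
      using h unfolding is_cyc_period_def by blast
    then show "s ((j + \<rho>) mod N + 1) = s (j mod N + 1)" by (simp add: mod_add_left_eq)
  qed
next
  assume h: "\<forall>j. s ((j + \<rho>) mod N + 1) = s (j mod N + 1)"
  show "is_cyc_period s N \<rho>" unfolding is_cyc_period_def
  proof
    fix i assume i: "i \<in> {1..N}"
    then have "i - 1 < N" by auto
    then have "(i - 1) mod N = i - 1" by simp
    then show "s ((i - 1 + \<rho>) mod N + 1) = s i" using h[rule_format, of "i - 1"] i by simp
  qed
qed

lemma count_mod:
  assumes "y < v"
  shows "card {x\<in>{1..c*v}. x mod v = y} = c"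
proof -
  have per: "\<forall>j. Suc (j + v) mod v = Suc j mod v" by (metis add_Suc mod_add_self2)
  have "{x\<in>{1..c*v}. x mod v = y} = Suc ` {j\<in>{0..<c*v}. Suc j mod v = y}"
  proof (intro equalityI subsetI)
    fix x assume "x \<in> {x\<in>{1..c*v}. x mod v = y}"
    then have "x = Suc (x - 1)" "x - 1 \<in> {j\<in>{0..<c*v}. Suc j mod v = y}" by auto
    then show "x \<in> Suc ` {j\<in>{0..<c*v}. Suc j mod v = y}" by blast
  qed auto
  then have "card {x\<in>{1..c*v}. x mod v = y} = card {j\<in>{0..<c*v}. Suc j mod v = y}"
    by (simp add: card_image)
  also have "\<dots> = c * card {j\<in>{0..<v}. Suc j mod v = y}"
    by (rule cnt_periodic) (use per in simp)
  also have "{j\<in>{0..<v}. Suc j mod v = y} = {if y = 0 then v - 1 else y - 1}"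
  proof (intro equalityI subsetI)
    fix j assume j: "j \<in> {j\<in>{0..<v}. Suc j mod v = y}"
    show "j \<in> {if y = 0 then v - 1 else y - 1}"
    proof (cases "Suc j < v")
      case True then show ?thesis using j by auto
    next
      case False then have "Suc j = v" using j by auto
      then show ?thesis using j by auto
    qed
  next
    fix j assume "j \<in> {if y = 0 then v - 1 else y - 1}"
    then show "j \<in> {j\<in>{0..<v}. Suc j mod v = y}" using assms by (auto split: if_splits)
  qed
  finally show ?thesis by simp
qed



lemma res_count:
  assumes "\<pi> permutes S" "finite S"
  shows "card {i\<in>S. \<pi> i mod v = y} = card {x\<in>S. x mod v = y}"
proof -
  have im: "\<pi> ` S = S" using assms(1) by (rule permutes_image)
  have eq: "\<pi> ` {i\<in>S. \<pi> i mod v = y} = {x\<in>S. x mod v = y}"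
  proof (intro equalityI subsetI)
    fix x assume "x \<in> \<pi> ` {i\<in>S. \<pi> i mod v = y}"
    then show "x \<in> {x\<in>S. x mod v = y}" using im by blast
  next
    fix x assume x: "x \<in> {x\<in>S. x mod v = y}"
    then obtain i where "i \<in> S" "x = \<pi> i" using im by blast
    then show "x \<in> \<pi> ` {i\<in>S. \<pi> i mod v = y}" using x by blast
  qed
  have inj: "inj_on \<pi> {i\<in>S. \<pi> i mod v = y}" using assms(1) by (rule permutes_inj_on)
  show ?thesis using card_image[OF inj] eq by simp
qed
lemma fib_card:
  assumes "n = c * v" "v > 0" "r ` {1..n} \<subseteq> {0..<v}" "\<forall>y<v. card {i\<in>{1..n}. r i = y} = c"
  shows "card {\<pi>. \<pi> permutes {1..n} \<and> (\<forall>i\<in>{1..n}. \<pi> i mod v = r i)} = fact c ^ v"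
proof -
  have cnts: "\<forall>y. card {i\<in>{1..n}. r i = y} = card {x\<in>{1..n}. x mod v = y}"
  proof
    fix y show "card {i\<in>{1..n}. r i = y} = card {x\<in>{1..n}. x mod v = y}"
    proof (cases "y < v")
      case True then show ?thesis using assms count_mod[of y v c] by simp
    next
      case False
      have lt: "\<forall>x. x mod v < v" using assms(2) by simp
      have e1: "{i\<in>{1..n}. r i = y} = {}" using assms(3) False by (auto simp: image_subset_iff)
      have e2: "{x\<in>{1..n}. x mod v = y} = {}" using lt False by auto
      show ?thesis by (simp only: e1 e2)
    qed
  qed
  have "card {\<pi>. \<pi> permutes {1..n} \<and> (\<forall>i\<in>{1..n}. \<pi> i mod v = r i)} = (\<Prod>y\<in>{0..<v}. fact (card {i\<in>{1..n}. r i = y}))"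
    by (rule perm_count) (use assms cnts in auto)
  also have "\<dots> = (\<Prod>y\<in>{0..<v}. fact c)" using assms(4) by (intro prod.cong) auto
  finally show ?thesis by simp
qed

definition Rset :: "nat \<Rightarrow> nat \<Rightarrow> nat \<Rightarrow> ((nat \<Rightarrow> nat) \<Rightarrow> bool) \<Rightarrow> (nat \<Rightarrow> nat) set" where
  "Rset v n c P = {r \<in> PiE {1..n} (\<lambda>_. {0..<v}). (\<forall>y<v. card {i\<in>{1..n}. r i = y} = c) \<and> P r}"

lemma perm_decomp:
  assumes "n = c * v" "v > 0"
  shows "card {\<pi>. \<pi> permutes {1..n} \<and> P (restrict (\<lambda>i. \<pi> i mod v) {1..n})} = card (Rset v n c P) * fact c ^ v"
proof -
  define Fib where "Fib r = {\<pi>. \<pi> permutes {1..n} \<and> (\<forall>i\<in>{1..n}. \<pi> i mod v = r i)}" for r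
  have eq: "{\<pi>. \<pi> permutes {1..n} \<and> P (restrict (\<lambda>i. \<pi> i mod v) {1..n})} = (\<Union>r\<in>Rset v n c P. Fib r)"
  proof (intro equalityI subsetI)
    fix \<pi> assume "\<pi> \<in> {\<pi>. \<pi> permutes {1..n} \<and> P (restrict (\<lambda>i. \<pi> i mod v) {1..n})}"
    then have pi: "\<pi> permutes {1..n}" "P (restrict (\<lambda>i. \<pi> i mod v) {1..n})" by auto
    define r where "r = restrict (\<lambda>i. \<pi> i mod v) {1..n}"
    have "card {i\<in>{1..n}. r i = y} = c" if "y < v" for y
    proof -
      have "{i\<in>{1..n}. r i = y} = {i\<in>{1..n}. \<pi> i mod v = y}" unfolding r_def by auto
      then show ?thesis using res_count[OF pi(1)] count_mod[OF that, of c] assms(1) by simp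
    qed
    then have "r \<in> Rset v n c P" unfolding Rset_def using pi(2) assms(2) by (auto simp: r_def)
    moreover have "\<pi> \<in> Fib r" unfolding Fib_def r_def using pi by auto
    ultimately show "\<pi> \<in> (\<Union>r\<in>Rset v n c P. Fib r)" by blast
  next
    fix \<pi> assume "\<pi> \<in> (\<Union>r\<in>Rset v n c P. Fib r)"
    then obtain r where r: "r \<in> Rset v n c P" and pi: "\<pi> \<in> Fib r" by blast
    have "restrict (\<lambda>i. \<pi> i mod v) {1..n} = r"
      using r pi unfolding Rset_def Fib_def by (auto simp: PiE_iff extensional_def)
    then show "\<pi> \<in> {\<pi>. \<pi> permutes {1..n} \<and> P (restrict (\<lambda>i. \<pi> i mod v) {1..n})}"
      using r pi unfolding Rset_def Fib_def by auto
  qed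
  have finR: "finite (Rset v n c P)" unfolding Rset_def
    by (rule finite_subset[OF _ finite_PiE[of "{1..n}" "\<lambda>_. {0..<v}"]]) auto
  have finF: "finite (Fib r)" for r
    unfolding Fib_def by (rule finite_subset[OF _ finite_permutations[of "{1..n}"]]) auto
  have disj: "\<forall>r1\<in>Rset v n c P. \<forall>r2\<in>Rset v n c P. r1 \<noteq> r2 \<longrightarrow> Fib r1 \<inter> Fib r2 = {}"
  proof (intro ballI impI)
    fix r1 r2 assume r: "r1 \<in> Rset v n c P" "r2 \<in> Rset v n c P" "r1 \<noteq> r2"
    obtain i where i: "r1 i \<noteq> r2 i" using r(3) by (meson ext)
    have "i \<in> {1..n}"
    proof (rule ccontr)
      assume "i \<notin> {1..n}"
      then have "r1 i = undefined" "r2 i = undefined" using r(1,2) unfolding Rset_def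
        by (auto simp: PiE_def extensional_def)
      then show False using i by simp
    qed
    then have "i \<in> {1..n}" "r1 i \<noteq> r2 i" using i by auto
    then show "Fib r1 \<inter> Fib r2 = {}" unfolding Fib_def by auto
  qed
  have "card (\<Union>r\<in>Rset v n c P. Fib r) = (\<Sum>r\<in>Rset v n c P. card (Fib r))"
    by (rule card_UN_disjoint[OF finR]) (use finF disj in auto)
  also have "\<dots> = (\<Sum>r\<in>Rset v n c P. fact c ^ v)"
  proof (rule sum.cong[OF refl])
    fix r assume r: "r \<in> Rset v n c P"
    show "card (Fib r) = fact c ^ v" unfolding Fib_def
      by (rule fib_card[OF assms]) (use r in \<open>auto simp: Rset_def PiE_iff\<close>)
  qed
  finally show ?thesis using eq by simp
qed


lemma per_restrict:
  assumes "N > 0"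
  shows "is_cyc_period (restrict s {1..N}) N \<rho> = is_cyc_period s N \<rho>"
proof -
  have mem: "(i - 1 + \<rho>) mod N + 1 \<in> {1..N}" for i using assms by (simp add: Suc_leI)
  have "(restrict s {1..N} ((i - 1 + \<rho>) mod N + 1) = restrict s {1..N} i) = (s ((i - 1 + \<rho>) mod N + 1) = s i)"
    if "i \<in> {1..N}" for i using mem[of i] that by (simp only: restrict_apply')
  then show ?thesis unfolding is_cyc_period_def by blast
qed

lemma shift_card:
  fixes r :: "nat \<Rightarrow> 'a"
  assumes "M \<le> N"
  shows "card {i\<in>{1..M}. r i = y} = card {j\<in>{0..<M}. r (j mod N + 1) = y}"
proof -
  have "{i\<in>{1..M}. r i = y} = Suc ` {j\<in>{0..<M}. r (j mod N + 1) = y}"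
  proof (intro equalityI subsetI)
    fix x assume x: "x \<in> {i\<in>{1..M}. r i = y}"
    then have "(x - 1) mod N = x - 1" using assms by auto
    then have "x = Suc (x - 1)" "x - 1 \<in> {j\<in>{0..<M}. r (j mod N + 1) = y}" using x by auto
    then show "x \<in> Suc ` {j\<in>{0..<M}. r (j mod N + 1) = y}" by blast
  next
    fix x assume "x \<in> Suc ` {j\<in>{0..<M}. r (j mod N + 1) = y}"
    then obtain j where j: "j < M" "r (j mod N + 1) = y" "x = Suc j" by auto
    then have "j mod N = j" using assms by auto
    then show "x \<in> {i\<in>{1..M}. r i = y}" using j by auto
  qed
  then show ?thesis by (simp add: card_image)
qed

lemma per_count:
  assumes "N = q * L" "L > 0" "q > 0" "is_cyc_period r N L"
  shows "card {i\<in>{1..N}. r i = y} = q * card {i\<in>{1..L}. r i = y}"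
proof -
  have N0: "N > 0" using assms by simp
  have LN: "L \<le> N" using assms by simp
  define e where "e j = r (j mod N + 1)" for j
  have pe: "\<forall>j. e (j + L) = e j" using assms(4) per_iff[OF N0] unfolding e_def by blast
  have "card {i\<in>{1..N}. r i = y} = card {j\<in>{0..<N}. e j = y}"
    unfolding e_def by (rule shift_card) simp
  also have "\<dots> = q * card {j\<in>{0..<L}. e j = y}"
    using cnt_periodic[OF pe, of q y] assms(1) by simp
  also have "card {j\<in>{0..<L}. e j = y} = card {i\<in>{1..L}. r i = y}"
    unfolding e_def by (rule shift_card[symmetric]) (rule LN)
  finally show ?thesis .
qed

lemma per_reduce:
  fixes r :: "nat \<Rightarrow> 'a"
  assumes "N > 0" "L > 0" "L dvd N" "is_cyc_period r N L" "i \<in> {1..N}"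
  shows "r i = r ((i - 1) mod L + 1)"
proof -
  define e where "e j = r (j mod N + 1)" for j
  have pe: "\<forall>j. e (j + L) = e j" using assms(4) per_iff[OF assms(1)] unfolding e_def by blast
  have "e (i - 1) = e ((i - 1) mod L + ((i - 1) div L) * L)" by simp
  also have "\<dots> = e ((i - 1) mod L)" by (rule per_mult[OF pe])
  finally have "e (i - 1) = e ((i - 1) mod L)" .
  moreover have "L \<le> N" using assms(1,3) by (simp add: dvd_imp_le)
  moreover have "(i - 1) mod L < L" using assms(2) by simp
  ultimately show ?thesis using assms(5) unfolding e_def by auto
qed

lemma Rset_bij:
  assumes "v > 0" "N = q * L" "L > 0" "q > 0" "k = q * m"
  shows "card (Rset v N k (\<lambda>r. is_cyc_period r N L)) = card (Rset v L m (\<lambda>_. True))"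
proof -
  let ?A = "Rset v N k (\<lambda>r. is_cyc_period r N L)"
  let ?B = "Rset v L m (\<lambda>_. True)"
  have N0: "N > 0" using assms by simp
  have LN: "L \<le> N" using assms by simp
  have Ldvd: "L dvd N" using assms by simp
  have inj: "inj_on (\<lambda>r. restrict r {1..L}) ?A"
  proof (rule inj_onI)
    fix r1 r2 assume r: "r1 \<in> ?A" "r2 \<in> ?A" "restrict r1 {1..L} = restrict r2 {1..L}"
    show "r1 = r2"
    proof
      fix i show "r1 i = r2 i"
      proof (cases "i \<in> {1..N}")
        case True
        have m: "(i - 1) mod L + 1 \<in> {1..L}" using assms(3) by (simp add: Suc_leI)
        have p1: "is_cyc_period r1 N L" "is_cyc_period r2 N L" using r(1,2) unfolding Rset_def by auto
        have "r1 i = r1 ((i - 1) mod L + 1)"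
          by (rule per_reduce[OF N0 assms(3) Ldvd p1(1) True])
        also have "\<dots> = r2 ((i - 1) mod L + 1)" using r(3) m by (metis restrict_apply')
        also have "\<dots> = r2 i"
          by (rule per_reduce[OF N0 assms(3) Ldvd p1(2) True, symmetric])
        finally show ?thesis .
      next
        case False
        then show ?thesis using r(1,2) unfolding Rset_def by (auto simp: PiE_def extensional_def)
      qed
    qed
  qed
  have img: "(\<lambda>r. restrict r {1..L}) ` ?A = ?B"
  proof (intro equalityI subsetI)
    fix r' assume "r' \<in> (\<lambda>r. restrict r {1..L}) ` ?A"
    then obtain r where r: "r \<in> ?A" and r': "r' = restrict r {1..L}" by blast
    have cnt: "card {i\<in>{1..L}. r' i = y} = m" if "y < v" for y
    proof -
      have "k = card {i\<in>{1..N}. r i = y}" using r that unfolding Rset_def by auto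
      also have "\<dots> = q * card {i\<in>{1..L}. r i = y}"
        by (rule per_count[OF assms(2,3,4)]) (use r in \<open>simp add: Rset_def\<close>)
      also have "{i\<in>{1..L}. r i = y} = {i\<in>{1..L}. r' i = y}" using r' by auto
      finally show ?thesis using assms(4,5) by simp
    qed
    have "r' \<in> PiE {1..L} (\<lambda>_. {0..<v})" using r r' LN unfolding Rset_def by (auto simp: PiE_iff)
    then show "r' \<in> ?B" using cnt unfolding Rset_def by auto
  next
    fix r' assume r': "r' \<in> ?B"
    define r where "r i = (if i \<in> {1..N} then r' ((i - 1) mod L + 1) else undefined)" for i
    have m: "(i - 1) mod L + 1 \<in> {1..L}" for i using assms(3) by (simp add: Suc_leI)
    have agree: "r i = r' i" if "i \<in> {1..L}" for i
    proof -
      have "(i - 1) mod L = i - 1" using that by auto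
      then show ?thesis using that LN unfolding r_def by auto
    qed
    have rr: "restrict r {1..L} = r'"
    proof
      fix i show "restrict r {1..L} i = r' i"
        using agree r' unfolding Rset_def by (auto simp: PiE_def extensional_def)
    qed
    have pi: "r \<in> PiE {1..N} (\<lambda>_. {0..<v})"
      using r' m unfolding Rset_def r_def by (auto simp: PiE_iff extensional_def)
    have per: "is_cyc_period r N L"
    proof -
      have "r (j mod N + 1) = r' (j mod L + 1)" for j
      proof -
        have "j mod N + 1 \<in> {1..N}" using N0 by (simp add: Suc_leI)
        then show ?thesis unfolding r_def by (simp add: mod_mod_cancel[OF Ldvd])
      qed
      then show ?thesis unfolding per_iff[OF N0] by simp
    qed
    have cnt: "card {i\<in>{1..N}. r i = y} = k" if "y < v" for y
    proof -
      have "card {i\<in>{1..N}. r i = y} = q * card {i\<in>{1..L}. r i = y}"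
        by (rule per_count[OF assms(2,3,4) per])
      also have "{i\<in>{1..L}. r i = y} = {i\<in>{1..L}. r' i = y}" using agree by auto
      also have "card \<dots> = m" using r' that unfolding Rset_def by auto
      finally show ?thesis using assms(5) by simp
    qed
    have "r \<in> ?A" using pi per cnt unfolding Rset_def by auto
    then show "r' \<in> (\<lambda>r. restrict r {1..L}) ` ?A" using rr by blast
  qed
  show ?thesis using card_image[OF inj] img by simp
qed

lemma Aq_count:
  assumes "v > 0" "N = k * v" "k > 0" "q > 0" "q dvd k"
  shows "card {\<pi>. \<pi> permutes {1..N} \<and> is_cyc_period (\<lambda>i. \<pi> i mod v) N (N div q)} * fact (k div q) ^ v
         = fact (N div q) * fact k ^ v"
proof -
  define m where "m = k div q"
  define L where "L = m * v"
  have km: "k = q * m" using assms(5) unfolding m_def by simp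
  have NL: "N = q * L" "N div q = L" using km assms(2,4) unfolding L_def by auto
  have L0: "L > 0" using km assms(1,3) unfolding L_def by (auto simp: gr0I)
  have N0: "N > 0" using NL L0 assms(4) by simp
  have "{\<pi>. \<pi> permutes {1..N} \<and> is_cyc_period (\<lambda>i. \<pi> i mod v) N L}
      = {\<pi>. \<pi> permutes {1..N} \<and> (\<lambda>r. is_cyc_period r N L) (restrict (\<lambda>i. \<pi> i mod v) {1..N})}"
    by (intro Collect_cong conj_cong refl) (rule per_restrict[OF N0, symmetric])
  then have c1: "card {\<pi>. \<pi> permutes {1..N} \<and> is_cyc_period (\<lambda>i. \<pi> i mod v) N L}
      = card (Rset v N k (\<lambda>r. is_cyc_period r N L)) * fact k ^ v"
    using perm_decomp[OF assms(2,1), of "\<lambda>r. is_cyc_period r N L"] by simp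
  have "fact L = card {\<pi>. \<pi> permutes {1..L} \<and> (\<lambda>_. True) (restrict (\<lambda>i. \<pi> i mod v) {1..L})}"
    using card_permutations[of "{1..L}" L] by simp
  also have "\<dots> = card (Rset v L m (\<lambda>_. True)) * fact m ^ v"
    by (rule perm_decomp[OF L_def assms(1)])
  finally have c2: "fact L = card (Rset v L m (\<lambda>_. True)) * fact m ^ v" .
  have c3: "card (Rset v N k (\<lambda>r. is_cyc_period r N L)) = card (Rset v L m (\<lambda>_. True))"
    by (rule Rset_bij[OF assms(1) NL(1) L0 assms(4) km])
  show ?thesis unfolding NL(2) m_def[symmetric] using c1 c2 c3 by (simp add: algebra_simps)
qed


lemma least_char:
  assumes "v \<ge> 2" "N = k * v" "k > 0" "\<pi> permutes {1..N}"
  shows "least_cyc_period (\<lambda>i. \<pi> i mod v) N \<noteq> N \<longleftrightarrow>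
         (\<exists>q. prime q \<and> q dvd k \<and> is_cyc_period (\<lambda>i. \<pi> i mod v) N (N div q))"
proof -
  define s where "s = (\<lambda>i. \<pi> i mod v)"
  define e where "e j = s (j mod N + 1)" for j
  have N0: "N > 0" using assms by simp
  have perE: "is_cyc_period s N \<rho> \<longleftrightarrow> (\<forall>j. e (j + \<rho>) = e j)" for \<rho>
    unfolding e_def by (rule per_iff[OF N0])
  have pN: "is_cyc_period s N N" unfolding perE e_def by simp
  define d where "d = least_cyc_period s N"
  have dP: "0 < d \<and> is_cyc_period s N d" unfolding d_def least_cyc_period_def
    by (rule LeastI[of _ N]) (use N0 pN in simp)
  have dmin: "d \<le> \<rho>" if "0 < \<rho>" "is_cyc_period s N \<rho>" for \<rho>
    unfolding d_def least_cyc_period_def by (rule Least_le) (use that in simp)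
  have dN: "d \<le> N" using dmin[OF N0 pN] .
  show ?thesis unfolding s_def[symmetric] d_def[symmetric]
  proof
    assume "d \<noteq> N"
    then have dlt: "d < N" using dN by simp
    have ed: "\<forall>j. e (j + d) = e j" using dP perE by blast
    have eN: "\<forall>j. e (j + N) = e j" using pN perE by blast
    obtain x y where xy: "d * x = N * y + gcd d N" using bezout_nat[of d N] dP by auto
    have eg: "\<forall>j. e (j + gcd d N) = e j"
    proof
      fix j
      have "e (j + gcd d N) = e ((j + gcd d N) + y * N)" by (rule per_mult[OF eN, symmetric])
      also have "(j + gcd d N) + y * N = j + x * d" using xy by (simp add: algebra_simps)
      also have "e (j + x * d) = e j" by (rule per_mult[OF ed])
      finally show "e (j + gcd d N) = e j" .
    qed
    have "gcd d N > 0" using dP by simp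
    then have "d \<le> gcd d N" using dmin[of "gcd d N"] eg perE by blast
    moreover have "gcd d N \<le> d" using dP by (simp add: gcd_le1_nat)
    ultimately have "gcd d N = d" by simp
    then have ddvd: "d dvd N" by (metis gcd_dvd2)
    define t where "t = N div d"
    have Ntd: "N = t * d" using ddvd t_def by simp
    have t1: "t \<noteq> 1" using Ntd dlt by auto
    have "k = card {x\<in>{1..k*v}. x mod v = 0}" using count_mod[of 0 v k] assms by simp
    also have "\<dots> = card {i\<in>{1..N}. s i = 0}" unfolding s_def using res_count[OF assms(4)] assms(2) by simp
    also have "\<dots> = card {j\<in>{0..<N}. e j = 0}" unfolding e_def by (rule shift_card) simp
    also have "\<dots> = t * card {j\<in>{0..<d}. e j = 0}" using cnt_periodic[OF ed, of t 0] Ntd by simp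
    finally have tk: "t dvd k" by simp
    obtain q where q: "prime q" "q dvd t" using prime_factor_nat[OF t1] by blast
    obtain t' where t': "t = q * t'" using q(2) by blast
    have q0: "q > 0" using q(1) prime_gt_0_nat by blast
    have "N div q = t' * d" using Ntd t' q0 by simp
    then have "is_cyc_period s N (N div q)" unfolding perE using per_mult[OF ed] by simp
    moreover have "q dvd k" using q(2) tk by (rule dvd_trans)
    ultimately show "\<exists>q. prime q \<and> q dvd k \<and> is_cyc_period s N (N div q)" using q(1) by blast
  next
    assume "\<exists>q. prime q \<and> q dvd k \<and> is_cyc_period s N (N div q)"
    then obtain q where q: "prime q" "q dvd k" "is_cyc_period s N (N div q)" by blast
    have qN: "q dvd N" using q(2) assms(2) by simp
    have q2: "q \<ge> 2" using q(1) prime_ge_2_nat by blast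
    have "q \<le> N" using qN N0 by (simp add: dvd_imp_le)
    then have pos: "N div q > 0" using q2 by (simp add: div_greater_zero_iff)
    have lt: "N div q < N" using q2 N0 by simp
    have "d \<le> N div q" by (rule dmin[OF pos q(3)])
    then show "d \<noteq> N" using lt by simp
  qed
qed

lemma fact_add_pow: "fact x * (x + 1) ^ w \<le> (fact (x + w) :: nat)"
proof (induction w)
  case 0 then show ?case by simp
next
  case (Suc w)
  have "fact x * (x + 1) ^ Suc w = (x + 1) * (fact x * (x + 1) ^ w)" by (simp add: algebra_simps)
  also have "\<dots> \<le> (x + 1) * fact (x + w)" by (rule mult_le_mono2[OF Suc.IH])
  also have "\<dots> \<le> (x + w + 1) * fact (x + w)" by simp
  also have "\<dots> = fact (x + Suc w)" by (simp add: algebra_simps)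
  finally show ?case .
qed

lemma fact_block:
  assumes "v \<ge> 2"
  shows "2 * (j + 1) ^ v * fact (v * j) \<le> (fact (v * (j + 1)) :: nat)"
proof -
  obtain w where w: "v = Suc w" using assms by (cases v) auto
  have e: "v * (j + 1) = Suc (v * j + w)" using w by simp
  have "2 * (j + 1) ^ v * fact (v * j) = (2 * (j + 1)) * (fact (v * j) * (j + 1) ^ w)"
    using w by (simp add: algebra_simps)
  also have "\<dots> \<le> (2 * (j + 1)) * (fact (v * j) * (v * j + 1) ^ w)"
  proof -
    have "j + 1 \<le> v * j + 1" using assms by simp
    then have "(j + 1) ^ w \<le> (v * j + 1) ^ w" by (rule power_mono) simp
    then show ?thesis by (rule mult_le_mono2[OF mult_le_mono2])
  qed
  also have "\<dots> \<le> (2 * (j + 1)) * fact (v * j + w)"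
    by (rule mult_le_mono2[OF fact_add_pow[of "v * j" w]])
  also have "\<dots> \<le> Suc (v * j + w) * fact (v * j + w)"
  proof -
    have "2 * (j + 1) \<le> Suc (v * j + w)" using e assms
      by (metis mult_le_mono1 mult.commute)
    then show ?thesis by (rule mult_le_mono1)
  qed
  also have "\<dots> = fact (v * (j + 1))" by (simp only: e fact_Suc of_nat_id)
  finally show ?thesis .
qed

lemma fact_ratio:
  assumes "v \<ge> 2" "m \<le> j"
  shows "2 ^ (j - m) * fact j ^ v * fact (v * m) \<le> (fact (v * j) * fact m ^ v :: nat)"
  using assms(2)
proof (induction j rule: dec_induct)
  case base then show ?case by simp
next
  case (step j)
  have "2 ^ (Suc j - m) * fact (Suc j) ^ v * fact (v * m)
      = (2 * (j + 1) ^ v) * (2 ^ (j - m) * fact j ^ v * fact (v * m))"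
  proof -
    have a: "fact (Suc j) ^ v = (j+1)^v * (fact j ^ v :: nat)"
      unfolding fact_Suc of_nat_id power_mult_distrib by simp
    have b: "2 ^ (Suc j - m) = 2 * (2::nat) ^ (j - m)" using step.hyps by (simp add: Suc_diff_le)
    show ?thesis unfolding a b by (simp add: mult_ac)
  qed
  also have "\<dots> \<le> (2 * (j + 1) ^ v) * (fact (v * j) * fact m ^ v)"
    by (rule mult_le_mono2[OF step.IH])
  also have "\<dots> = (2 * (j + 1) ^ v * fact (v * j)) * fact m ^ v" by (simp add: algebra_simps)
  also have "\<dots> \<le> fact (v * (j + 1)) * fact m ^ v"
    using fact_block[OF assms(1), of j] by simp
  finally show ?case by simp
qed


lemma main_bounds:
  assumes "v \<ge> 2" "N = k * v" "k > 0"
  defines "Q \<equiv> {q. prime q \<and> q dvd k}"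
    and "tm \<equiv> (\<lambda>q. fact (N div q) * (fact k) ^ v / (fact N * (fact (k div q)) ^ v) :: real)"
    and "Tset \<equiv> {\<pi>. \<pi> permutes {1..N} \<and> least_cyc_period (\<lambda>i. \<pi> i mod v) N = N}"
  shows "fact N * (1 - (\<Sum>q\<in>Q. tm q)) \<le> real (card Tset)"
    and "q0 \<in> Q \<Longrightarrow> real (card Tset) \<le> fact N * (1 - tm q0)"
    and "card Tset \<le> fact N"
proof -
  define A where "A q = {\<pi>. \<pi> permutes {1..N} \<and> is_cyc_period (\<lambda>i. \<pi> i mod v) N (N div q)}" for q
  define P where "P = {\<pi>. \<pi> permutes ({1..N}::nat set)}"
  let ?U = "\<Union>q\<in>Q. A q"
  have Tdiff: "Tset = P - ?U"
  proof (intro equalityI subsetI)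
    fix \<pi> assume "\<pi> \<in> Tset"
    then have pi: "\<pi> permutes {1..N}" "least_cyc_period (\<lambda>i. \<pi> i mod v) N = N" unfolding Tset_def by auto
    then have "\<not> (\<exists>q. prime q \<and> q dvd k \<and> is_cyc_period (\<lambda>i. \<pi> i mod v) N (N div q))"
      using least_char[OF assms(1,2,3) pi(1)] by simp
    then show "\<pi> \<in> P - ?U" using pi unfolding P_def A_def Q_def by auto
  next
    fix \<pi> assume "\<pi> \<in> P - ?U"
    then have pi: "\<pi> permutes {1..N}" "\<not> (\<exists>q. prime q \<and> q dvd k \<and> is_cyc_period (\<lambda>i. \<pi> i mod v) N (N div q))"
      unfolding P_def A_def Q_def by auto
    then have "least_cyc_period (\<lambda>i. \<pi> i mod v) N = N"
      using least_char[OF assms(1,2,3) pi(1)] pi(2) by blast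
    then show "\<pi> \<in> Tset" using pi unfolding Tset_def by auto
  qed
  have sub: "?U \<subseteq> P" unfolding A_def P_def by auto
  have finP: "finite P" unfolding P_def by (rule finite_permutations) simp
  have cardP: "card P = fact N" unfolding P_def by (rule card_permutations) simp_all
  have finU: "finite ?U" using finite_subset[OF sub finP] .
  have finQ: "finite Q"
    by (rule finite_subset[of _ "{..k}"]) (use assms(3) in \<open>auto simp: Q_def dvd_imp_le\<close>)
  have cU: "card ?U \<le> card P" using card_mono[OF finP sub] .
  have cT: "real (card Tset) = fact N - real (card ?U)"
    unfolding Tdiff using card_Diff_subset[OF finU sub] cU cardP by (simp add: of_nat_diff)
  have cA: "real (card (A q)) = fact N * tm q" if "q \<in> Q" for q
  proof -
    have q: "prime q" "q dvd k" using that unfolding Q_def by auto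
    have q0: "q > 0" using q(1) prime_gt_0_nat by blast
    have "card (A q) * fact (k div q) ^ v = fact (N div q) * fact k ^ v"
      unfolding A_def by (rule Aq_count[OF _ assms(2,3) q0 q(2)]) (use assms(1) in simp)
    then have "real (card (A q)) * fact (k div q) ^ v = fact (N div q) * fact k ^ v"
      by (metis (mono_tags) of_nat_fact of_nat_mult of_nat_power)
    moreover have "(fact (k div q) :: real) ^ v > 0" "(fact N :: real) > 0" by simp_all
    ultimately show ?thesis unfolding tm_def by (simp add: field_simps)
  qed
  show "fact N * (1 - (\<Sum>q\<in>Q. tm q)) \<le> real (card Tset)"
  proof -
    have "real (card ?U) \<le> real (\<Sum>q\<in>Q. card (A q))"
      using card_UN_le[OF finQ, of A] by (simp only: of_nat_le_iff)
    also have "\<dots> = (\<Sum>q\<in>Q. real (card (A q)))" by simp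
    also have "\<dots> = (\<Sum>q\<in>Q. fact N * tm q)" by (rule sum.cong) (simp_all add: cA)
    also have "\<dots> = fact N * (\<Sum>q\<in>Q. tm q)" by (simp add: sum_distrib_left)
    finally show ?thesis using cT by (simp add: algebra_simps)
  qed
  show "real (card Tset) \<le> fact N * (1 - tm q0)" if "q0 \<in> Q"
  proof -
    have "A q0 \<subseteq> ?U" using that by blast
    then have "card (A q0) \<le> card ?U" using card_mono[OF finU] by blast
    then have "real (card (A q0)) \<le> real (card ?U)" by simp
    then show ?thesis using cT cA[OF that] by (simp add: algebra_simps)
  qed
  show "card Tset \<le> fact N" using cU cardP unfolding Tdiff using card_Diff_subset[OF finU sub] by simp
qed

lemma tm_bound:
  assumes "v \<ge> 2" "N = k * v" "q \<ge> 2" "q dvd k"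
  shows "fact (N div q) * (fact k) ^ v / (fact N * (fact (k div q)) ^ v) \<le> (1 / 2 powr (real k / 2) :: real)"
proof -
  define m where "m = k div q"
  have km: "k = q * m" using assms(4) m_def by simp
  have NL: "N div q = v * m" using km assms(2,3) by simp
  have N': "N = v * k" using assms(2) by simp
  have mk: "m \<le> k" unfolding m_def by simp
  have nat_ineq: "2 ^ (k - m) * fact k ^ v * fact (v * m) \<le> (fact (v * k) * fact m ^ v :: nat)"
    by (rule fact_ratio[OF assms(1) mk])
  then have real_ineq: "2 ^ (k - m) * fact k ^ v * fact (v * m) \<le> (fact (v * k) * fact m ^ v :: real)"
    by (metis (mono_tags) of_nat_fact of_nat_mult of_nat_power of_nat_le_iff of_nat_numeral)
  have pos: "(fact (v * k) * fact m ^ v :: real) > 0" by simp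
  have t1: "fact (v * m) * (fact k) ^ v / (fact (v * k) * (fact m) ^ v) \<le> (1 / 2 ^ (k - m) :: real)"
    using real_ineq pos by (simp add: field_simps)
  have "m \<le> k div 2" unfolding m_def using assms(3) by (simp add: div_le_mono2)
  then have "real k / 2 \<le> real (k - m)" by linarith
  then have "2 powr (real k / 2) \<le> 2 powr (real (k - m))" by simp
  also have "\<dots> = 2 ^ (k - m)" by (simp add: powr_realpow)
  finally have "1 / 2 ^ (k - m) \<le> (1 / 2 powr (real k / 2) :: real)"
    by (simp add: divide_simps)
  with t1 show ?thesis unfolding NL m_def[symmetric] unfolding N' by linarith
qed

lemma lim_aux: "(\<lambda>k::nat. real k / 2 powr (real k / 2)) \<longlonglongrightarrow> 0"
  by real_asymp


lemma setup_p:
  fixes p v :: nat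
  assumes "v \<ge> 2" "p mod v = 1"
  shows "p - 1 = ((p - 1) div v) * v"
proof -
  have e: "p - 1 = (p div v) * v" using div_mult_mod_eq[of p v] assms(2) by linarith
  have "(p - 1) div v = p div v" using assms(1) by (subst e) simp
  then show ?thesis using e by simp
qed

theorem theorem1:
  fixes v :: nat
  assumes "v \<ge> 2"
  shows "(\<forall>p::nat. prime p \<and> p mod v = 1 \<and> p - 1 > v \<longrightarrow>
           (let k = (p - 1) div v; Q = {q. prime q \<and> q dvd k}; q' = Min Q;
                tm = (\<lambda>q. fact ((p - 1) div q) * (fact k) ^ v /
                          (fact (p - 1) * (fact (k div q)) ^ v) :: real)
            in fact (p - 1) * (1 - (\<Sum>q\<in>Q. tm q)) \<le> real (T_count v p) \<and>
               real (T_count v p) \<le> fact (p - 1) * (1 - tm q')))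
       \<and> (\<forall>\<epsilon>::real. \<epsilon> > 0 \<longrightarrow> (\<exists>n. \<forall>p::nat. prime p \<and> p \<ge> n \<and> p mod v = 1 \<longrightarrow>
             fact (p - 1) * (1 - \<epsilon>) \<le> real (T_count v p) \<and>
             real (T_count v p) \<le> fact (p - 1)))"
proof (intro conjI allI impI)
  fix p :: nat
  assume h: "prime p \<and> p mod v = 1 \<and> p - 1 > v"
  define k where "k = (p - 1) div v"
  have Nk: "p - 1 = k * v" unfolding k_def using setup_p[OF assms] h by blast
  have k1: "k \<noteq> 1" using Nk h by auto
  have k0: "k > 0" using Nk h by (cases k) auto
  define Q where "Q = {q. prime q \<and> q dvd k}"
  have finQ: "finite Q"
    by (rule finite_subset[of _ "{..k}"]) (use k0 in \<open>auto simp: Q_def dvd_imp_le\<close>)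
  have neQ: "Q \<noteq> {}" using prime_factor_nat[OF k1] unfolding Q_def by blast
  have minQ: "Min Q \<in> Q" using Min_in[OF finQ neQ] .
  note mb = main_bounds[OF assms Nk k0]
  show "let k = (p - 1) div v; Q = {q. prime q \<and> q dvd k}; q' = Min Q;
                tm = (\<lambda>q. fact ((p - 1) div q) * (fact k) ^ v /
                          (fact (p - 1) * (fact (k div q)) ^ v) :: real)
            in fact (p - 1) * (1 - (\<Sum>q\<in>Q. tm q)) \<le> real (T_count v p) \<and>
               real (T_count v p) \<le> fact (p - 1) * (1 - tm q')"
    unfolding Let_def k_def[symmetric]
  proof (rule conjI)
    show "fact (p - 1) * (1 - (\<Sum>q\<in>{q. prime q \<and> q dvd k}. fact ((p - 1) div q) * fact k ^ v / (fact (p - 1) * fact (k div q) ^ v))) \<le> real (T_count v p)"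
      unfolding T_count_def by (rule mb(1))
    show "real (T_count v p) \<le> fact (p - 1) * (1 - fact ((p - 1) div Min {q. prime q \<and> q dvd k}) * fact k ^ v / (fact (p - 1) * fact (k div Min {q. prime q \<and> q dvd k}) ^ v))"
      unfolding T_count_def by (rule mb(2)[OF minQ[unfolded Q_def]])
  qed
next
  fix \<epsilon> :: real
  assume eps: "\<epsilon> > 0"
  have "eventually (\<lambda>k. real k / 2 powr (real k / 2) < \<epsilon>) sequentially"
    using order_tendstoD(2)[OF lim_aux eps] .
  then obtain K where K: "\<And>k. k \<ge> K \<Longrightarrow> real k / 2 powr (real k / 2) < \<epsilon>"
    unfolding eventually_sequentially by blast
  show "\<exists>n. \<forall>p::nat. prime p \<and> p \<ge> n \<and> p mod v = 1 \<longrightarrow>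
             fact (p - 1) * (1 - \<epsilon>) \<le> real (T_count v p) \<and>
             real (T_count v p) \<le> fact (p - 1)"
  proof (intro exI allI impI)
    fix p :: nat
    assume h: "prime p \<and> v * (K + 2) + 2 \<le> p \<and> p mod v = 1"
    define k where "k = (p - 1) div v"
    have Nk: "p - 1 = k * v" unfolding k_def using setup_p[OF assms] h by blast
    have "(K + 2) * v < k * v" using Nk h by (simp add: algebra_simps, linarith)
    then have kK: "K + 2 < k" by (rule mult_less_cancel2[THEN iffD1, THEN conjunct2])
    have k0: "k > 0" using kK by simp
    define Q where "Q = {q. prime q \<and> q dvd k}"
    note mb = main_bounds[OF assms Nk k0]
    have cQ: "card Q \<le> k"
    proof -
      have "Q \<subseteq> {1..k}" unfolding Q_def using k0 by (auto simp: dvd_imp_le prime_ge_1_nat)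
      then show ?thesis using card_mono[of "{1..k}" Q] by simp
    qed
    define tm where "tm = (\<lambda>q. fact ((p - 1) div q) * (fact k) ^ v / (fact (p - 1) * (fact (k div q)) ^ v) :: real)"
    have "(\<Sum>q\<in>Q. tm q) \<le> (\<Sum>q\<in>Q. 1 / 2 powr (real k / 2))"
    proof (rule sum_mono)
      fix q assume "q \<in> Q"
      then have q: "prime q" "q dvd k" unfolding Q_def by auto
      show "tm q \<le> 1 / 2 powr (real k / 2)" unfolding tm_def
        by (rule tm_bound[OF assms Nk _ q(2)]) (use q(1) prime_ge_2_nat in blast)
    qed
    also have "\<dots> = real (card Q) * (1 / 2 powr (real k / 2))" by simp
    also have "\<dots> \<le> real k * (1 / 2 powr (real k / 2))"
      using cQ by (intro mult_right_mono) simp_all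
    also have "\<dots> < \<epsilon>" using K[of k] kK by simp
    finally have sl: "(\<Sum>q\<in>Q. tm q) \<le> \<epsilon>" by simp
    have "fact (p - 1) * (1 - \<epsilon>) \<le> fact (p - 1) * (1 - (\<Sum>q\<in>Q. tm q))"
      using sl by (intro mult_left_mono) simp_all
    also have "\<dots> \<le> real (T_count v p)"
      using mb(1) unfolding T_count_def Q_def tm_def by simp
    finally have lo: "fact (p - 1) * (1 - \<epsilon>) \<le> real (T_count v p)" .
    have "real (T_count v p) \<le> real (fact (p - 1))" unfolding T_count_def by (rule of_nat_le_iff[THEN iffD2, OF mb(3)])
    then show "fact (p - 1) * (1 - \<epsilon>) \<le> real (T_count v p) \<and> real (T_count v p) \<le> fact (p - 1)"
      using lo by simp
  qed
qed

end
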